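(* Let $p\ge 3$ be an odd integer, $\mu\ge 0$ and $\alpha>0$. Then for any initial data $(x_0,x_1)\in\mathbb{R}^2$ there exists a unique global solution $x\in C^2([0,\infty))$ of the initial value problem \[ x''(t)+\mu x'(t)+\alpha x(t)^p=0,\quad t>0,\qquad x(0)=x_0,\ x'(0)=x_1. \] Moreover, if $\mu>0$, there exists a constant $C_*>0$ such that this solution satisfies \[ |x(t)|\le C_*\, t^{-\frac{1}{p-1}}\quad\text{for all } t>0. \] *)

theory Defs
  imports "HOL-Analysis.Analysis"
begin

definition C2_nonneg_with :: "(real \<Rightarrow> real) \<Rightarrow> (real \<Rightarrow> real) \<Rightarrow> (real \<Rightarrow> real) \<Rightarrow> bool" where
  "C2_nonneg_with x x' x'' \<longleftrightarrow>
     (\<forall>t\<ge>0. (x has_real_derivative x' t) (at t within {0..}) \<and>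
            (x' has_real_derivative x'' t) (at t within {0..})) \<and>
     continuous_on {0..} x''"

definition ivp_solution :: "real \<Rightarrow> real \<Rightarrow> nat \<Rightarrow> real \<Rightarrow> real \<Rightarrow> (real \<Rightarrow> real) \<Rightarrow> bool" where
  "ivp_solution mu alpha p x0 x1 x \<longleftrightarrow>
     (\<exists>x' x''. C2_nonneg_with x x' x'' \<and>
        (\<forall>t>0. x'' t + mu * x' t + alpha * (x t) ^ p = 0) \<and>
        x 0 = x0 \<and> x' 0 = x1)"

end

theory Submission
  imports Defs
begin

primrec pic :: "('a::banach \<Rightarrow> 'a) \<Rightarrow> 'a \<Rightarrow> nat \<Rightarrow> real \<Rightarrow> 'a" where
  "pic F y0 0 = (\<lambda>t. y0)"
| "pic F y0 (Suc n) = (\<lambda>t. y0 + integral {0..t} (\<lambda>s. F (pic F y0 n s)))"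

lemma lip_cont:
  fixes F :: "'a::real_normed_vector \<Rightarrow> 'b::real_normed_vector"
  assumes lip: "\<And>a b. norm (F a - F b) \<le> L * norm (a - b)" and L: "L > 0"
  shows "continuous_on S F"
  unfolding continuous_on_iff
proof (intro ballI allI impI)
  fix x e assume "x \<in> S" "(0::real) < e"
  show "\<exists>d>0. \<forall>x'\<in>S. dist x' x < d \<longrightarrow> dist (F x') (F x) < e"
  proof (intro exI[of _ "e/L"] conjI ballI impI)
    show "e / L > 0" using \<open>0 < e\<close> L by simp
    fix x' assume "dist x' x < e / L"
    then have "L * dist x' x < e" using L by (simp add: field_simps)
    moreover have "dist (F x') (F x) \<le> L * dist x' x" using lip[of x' x] by (simp add: dist_norm)
    ultimately show "dist (F x') (F x) < e" by linarith
  qed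
qed

context
  fixes F :: "'a::banach \<Rightarrow> 'a" and L :: real and y0 :: 'a
  assumes lip: "\<And>a b. norm (F a - F b) \<le> L * norm (a - b)" and L: "L \<ge> 1"
begin

lemma Fcont: "continuous_on S F"
  using lip_cont[OF lip] L by simp

lemma pic_cont: "continuous_on {0..T} (pic F y0 n)"
proof (induction n)
  case 0 then show ?case by simp
next
  case (Suc n)
  have "continuous_on {0..T} (\<lambda>s. F (pic F y0 n s))"
    by (rule continuous_on_compose2[OF Fcont Suc]) auto
  then have "continuous_on {0..T} (\<lambda>t. integral {0..t} (\<lambda>s. F (pic F y0 n s)))"
    by (intro indefinite_integral_continuous_1 integrable_continuous_real)
  then show ?case by (auto intro!: continuous_intros)
qed

lemma picF_cont: "continuous_on {0..T} (\<lambda>s. F (pic F y0 n s))"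
  by (rule continuous_on_compose2[OF Fcont pic_cont]) auto

lemma int_exp:
  fixes t c A :: real
  assumes "0 \<le> t" "0 < c"
  shows "integral {0..t} (\<lambda>s. A * exp (c * s)) = A * (exp (c * t) - 1) / c"
proof -
  have "((\<lambda>s. A * exp (c * s)) has_integral ((\<lambda>s. A * exp (c * s) / c) t - (\<lambda>s. A * exp (c * s) / c) 0)) {0..t}"
  proof (rule fundamental_theorem_of_calculus[of 0 t "\<lambda>s. A * exp (c * s) / c"])
    fix x assume "x \<in> {0..t}"
    have "((\<lambda>s. A * exp (c * s) / c) has_real_derivative (A * (exp (c * x) * (c * 1)) / c)) (at x within {0..t})"
      by (intro derivative_eq_intros) (use assms in auto)
    then show "((\<lambda>s. A * exp (c * s) / c) has_vector_derivative A * exp (c * x)) (at x within {0..t})"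
      using assms by (simp add: has_real_derivative_iff_has_vector_derivative)
  qed (use assms in simp)
  then have "integral {0..t} (\<lambda>s. A * exp (c * s)) = A * exp (c * t) / c - A / c"
    by (simp add: integral_unique del: integral_mult_right)
  then show ?thesis by (simp add: diff_divide_distrib right_diff_distrib del: integral_mult_right)
qed

lemma pic_diff_bound:
  assumes "t \<ge> 0"
  shows "norm (pic F y0 (Suc n) t - pic F y0 n t) \<le> norm (F y0) * (1/2)^n * exp (2*L*t)"
  using assms
proof (induction n arbitrary: t)
  case 0
  have "t \<le> exp (2*L*t)"
  proof -
    have "1 * t \<le> (2*L) * t" using L 0 by (intro mult_right_mono) auto
    then show ?thesis using exp_ge_add_one_self[of "2*L*t"] by linarith
  qed
  then have "t * norm (F y0) \<le> exp (2*L*t) * norm (F y0)" by (simp add: mult_right_mono)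
  then show ?case using 0 by (simp add: mult.commute)
next
  case (Suc n)
  let ?K = "norm (F y0) * (1/2)^n"
  have i1: "(\<lambda>s. F (pic F y0 (Suc n) s)) integrable_on {0..t}"
    by (rule integrable_continuous_real[OF picF_cont])
  have i0: "(\<lambda>s. F (pic F y0 n s)) integrable_on {0..t}"
    by (rule integrable_continuous_real[OF picF_cont])
  have "pic F y0 (Suc (Suc n)) t - pic F y0 (Suc n) t
      = integral {0..t} (\<lambda>s. F (pic F y0 (Suc n) s)) - integral {0..t} (\<lambda>s. F (pic F y0 n s))"
    by simp
  also have "\<dots> = integral {0..t} (\<lambda>s. F (pic F y0 (Suc n) s) - F (pic F y0 n s))"
    by (rule Henstock_Kurzweil_Integration.integral_diff[OF i1 i0, symmetric])
  finally have eqD: "pic F y0 (Suc (Suc n)) t - pic F y0 (Suc n) t = integral {0..t} (\<lambda>s. F (pic F y0 (Suc n) s) - F (pic F y0 n s))" .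
  have "norm (integral {0..t} (\<lambda>s. F (pic F y0 (Suc n) s) - F (pic F y0 n s))) \<le> integral {0..t} (\<lambda>s. (L * ?K) * exp ((2*L) * s))"
  proof (rule Henstock_Kurzweil_Integration.integral_norm_bound_integral)
    show "(\<lambda>s. F (pic F y0 (Suc n) s) - F (pic F y0 n s)) integrable_on {0..t}"
      using i1 i0 by (rule integrable_diff)
    show "(\<lambda>s. (L * ?K) * exp ((2*L) * s)) integrable_on {0..t}"
      by (intro integrable_continuous_real continuous_intros)
    fix s assume s: "s \<in> {0..t}"
    have "norm (F (pic F y0 (Suc n) s) - F (pic F y0 n s)) \<le> L * norm (pic F y0 (Suc n) s - pic F y0 n s)"
      by (rule lip)
    also have "\<dots> \<le> L * (?K * exp (2*L * s))"
      using Suc.IH[of s] s L by (intro mult_left_mono) auto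
    finally show "norm (F (pic F y0 (Suc n) s) - F (pic F y0 n s)) \<le> (L * ?K) * exp ((2*L) * s)"
      by (simp add: mult_ac)
  qed
  also have "\<dots> = (L * ?K) * (exp (2*L*t) - 1) / (2*L)"
    using Suc.prems L by (subst int_exp) auto
  also have "\<dots> \<le> norm (F y0) * (1/2)^(Suc n) * exp (2*L*t)"
    using L by (simp add: field_simps)
  finally show ?case using eqD by simp
qed

lemma picard_exists:
  "\<exists>Y. Y 0 = y0 \<and> (\<forall>t\<ge>0. (Y has_vector_derivative F (Y t)) (at t within {0..}))"
proof -
  define D where "D i t = pic F y0 (Suc i) t - pic F y0 i t" for i t
  define Y where "Y t = y0 + (\<Sum>i. D i t)" for t
  have tele: "pic F y0 n t = y0 + (\<Sum>i<n. D i t)" for n t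
    using sum_lessThan_telescope[of "\<lambda>i. pic F y0 i t" n] by (simp add: D_def del: pic.simps(2))
  have unif: "uniform_limit {0..T} (pic F y0) Y sequentially" for T
  proof -
    have "uniform_limit {0..T} (\<lambda>n t. \<Sum>i<n. D i t) (\<lambda>t. \<Sum>i. D i t) sequentially"
    proof (rule Weierstrass_m_test[where M = "\<lambda>n. norm (F y0) * exp (2*L*T) * (1/2)^n"])
      fix n t assume t: "t \<in> {0..T}"
      have "norm (D n t) \<le> norm (F y0) * (1/2)^n * exp (2*L*t)"
        unfolding D_def using t by (intro pic_diff_bound) auto
      also have "\<dots> \<le> norm (F y0) * (1/2)^n * exp (2*L*T)"
        using t L by (intro mult_left_mono) auto
      finally show "norm (D n t) \<le> norm (F y0) * exp (2*L*T) * (1/2)^n" by (simp add: mult_ac)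
    next
      show "summable (\<lambda>n. norm (F y0) * exp (2*L*T) * (1/2::real)^n)"
        by (intro summable_mult summable_geometric) auto
    qed
    then have "uniform_limit {0..T} (\<lambda>n t. y0 + (\<Sum>i<n. D i t)) (\<lambda>t. y0 + (\<Sum>i. D i t)) sequentially"
      by (intro uniform_limit_add uniform_limit_const)
    then show ?thesis by (simp add: tele[abs_def] Y_def[abs_def])
  qed
  have Ycont: "continuous_on {0..T} Y" for T
    by (rule uniform_limit_theorem[OF _ unif]) (auto intro: always_eventually pic_cont)
  have FYcont: "continuous_on {0..T} (\<lambda>s. F (Y s))" for T
    by (rule continuous_on_compose2[OF Fcont Ycont]) auto
  have Yint: "Y t = y0 + integral {0..t} (\<lambda>s. F (Y s))" if t: "t \<ge> 0" for t
  proof -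
    have ulF: "uniform_limit {0..t} (\<lambda>n s. F (pic F y0 n s)) (\<lambda>s. F (Y s)) sequentially"
    proof (rule uniform_limitI)
      fix e :: real assume e: "e > 0"
      then have "e / L > 0" using L by simp
      from uniform_limitD[OF unif this]
      have ev: "\<forall>\<^sub>F n in sequentially. \<forall>s\<in>{0..t}. dist (pic F y0 n s) (Y s) < e / L" .
      show "\<forall>\<^sub>F n in sequentially. \<forall>s\<in>{0..t}. dist (F (pic F y0 n s)) (F (Y s)) < e"
      proof (rule eventually_mono[OF ev], intro ballI)
        fix n s assume h: "\<forall>s\<in>{0..t}. dist (pic F y0 n s) (Y s) < e / L" and s: "s \<in> {0..t}"
        have "dist (F (pic F y0 n s)) (F (Y s)) \<le> L * dist (pic F y0 n s) (Y s)"
          using lip by (simp add: dist_norm)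
        also have "\<dots> < L * (e / L)" using h s L by (intro mult_strict_left_mono) auto
        finally show "dist (F (pic F y0 n s)) (F (Y s)) < e" using L by simp
      qed
    qed
    obtain I J where I: "\<And>n. ((\<lambda>s. F (pic F y0 n s)) has_integral I n) {0..t}"
      and J: "((\<lambda>s. F (Y s)) has_integral J) {0..t}" and IJ: "I \<longlonglongrightarrow> J"
      using uniform_limit_integral[OF ulF picF_cont] by auto
    have "(\<lambda>n. pic F y0 (Suc n) t) \<longlonglongrightarrow> Y t"
      using tendsto_uniform_limitI[OF unif[of t], of t] t
      by (intro LIMSEQ_Suc) auto
    moreover have "(\<lambda>n. pic F y0 (Suc n) t) = (\<lambda>n. y0 + I n)"
      using I by (auto simp: integral_unique)
    ultimately have "(\<lambda>n. y0 + I n) \<longlonglongrightarrow> Y t" by simp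
    moreover have "(\<lambda>n. y0 + I n) \<longlonglongrightarrow> y0 + J" by (intro tendsto_intros IJ)
    ultimately have "Y t = y0 + J" by (rule LIMSEQ_unique)
    then show ?thesis using J by (simp add: integral_unique)
  qed
  have "(Y has_vector_derivative F (Y t)) (at t within {0..})" if t: "t \<ge> 0" for t
  proof -
    have "((\<lambda>u. integral {0..u} (\<lambda>s. F (Y s))) has_vector_derivative F (Y t)) (at t within {0..t+1})"
      by (rule integral_has_vector_derivative[OF FYcont]) (use t in auto)
    then have "((\<lambda>u. y0 + integral {0..u} (\<lambda>s. F (Y s))) has_vector_derivative F (Y t)) (at t within {0..t+1})"
      by (subst add.commute) (simp add: has_vector_derivative_add_const)
    then have "(Y has_vector_derivative F (Y t)) (at t within {0..t+1})"
      by (rule has_vector_derivative_transform[rotated 2]) (use t Yint in auto)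
    moreover have "at t within {0..t+1} = at t within {0..}"
      by (rule at_within_nhd[of _ "{..<t+1}"]) (use t in auto)
    ultimately show ?thesis by simp
  qed
  moreover have "Y 0 = y0" using Yint[of 0] by simp
  ultimately show ?thesis by blast
qed

end

lemma pow_lip:
  fixes a b M :: real
  assumes "\<bar>a\<bar> \<le> M" "\<bar>b\<bar> \<le> M"
  shows "\<bar>a^n - b^n\<bar> \<le> n * M^(n-1) * \<bar>a - b\<bar>"
proof -
  have M0: "0 \<le> M" using assms(1) by linarith
  have "\<bar>\<Sum>i<n. b^(n - Suc i) * a^i\<bar> \<le> (\<Sum>i<n. \<bar>b^(n - Suc i) * a^i\<bar>)"
    by (rule sum_abs)
  also have "\<dots> \<le> (\<Sum>i<n. M^(n - 1))"
  proof (rule sum_mono)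
    fix i assume i: "i \<in> {..<n}"
    have "\<bar>b^(n - Suc i) * a^i\<bar> = \<bar>b\<bar>^(n - Suc i) * \<bar>a\<bar>^i" by (simp add: abs_mult power_abs)
    also have "\<dots> \<le> M^(n - Suc i) * M^i"
      by (intro mult_mono power_mono assms) (use M0 in auto)
    also have "\<dots> = M^(n - 1)" using i by (simp add: power_add[symmetric])
    finally show "\<bar>b^(n - Suc i) * a^i\<bar> \<le> M^(n - 1)" .
  qed
  also have "\<dots> = n * M^(n-1)" by simp
  finally have "\<bar>\<Sum>i<n. b^(n - Suc i) * a^i\<bar> \<le> n * M^(n-1)" .
  then have "\<bar>a - b\<bar> * \<bar>\<Sum>i<n. b^(n - Suc i) * a^i\<bar> \<le> \<bar>a - b\<bar> * (n * M^(n-1))"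
    by (intro mult_left_mono) auto
  then show ?thesis by (simp add: power_diff_sumr2 abs_mult mult_ac)
qed

definition clampR :: "real \<Rightarrow> real \<Rightarrow> real" where
  "clampR R x = max (-R) (min R x)"

lemma clampR_bound: "0 \<le> R \<Longrightarrow> \<bar>clampR R x\<bar> \<le> R"
  unfolding clampR_def by auto

lemma clampR_lip: "0 \<le> R \<Longrightarrow> \<bar>clampR R a - clampR R b\<bar> \<le> \<bar>a - b\<bar>"
  unfolding clampR_def by auto

lemma clampR_id: "\<bar>x\<bar> \<le> R \<Longrightarrow> clampR R x = x"
  unfolding clampR_def by auto

definition FF :: "real \<Rightarrow> real \<Rightarrow> nat \<Rightarrow> real \<Rightarrow> real \<times> real \<Rightarrow> real \<times> real" where
  "FF mu alpha p R y = (snd y, - mu * snd y - alpha * (clampR R (fst y))^p)"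

lemma FF_lip:
  assumes "mu \<ge> 0" "alpha > 0" "R \<ge> 0"
  shows "norm (FF mu alpha p R a - FF mu alpha p R b) \<le> (1 + mu + alpha * p * R^(p-1)) * norm (a - b)"
proof -
  obtain a1 a2 where a: "a = (a1, a2)" by fastforce
  obtain b1 b2 where b: "b = (b1, b2)" by fastforce
  have n1: "\<bar>a1 - b1\<bar> \<le> norm (a - b)" using norm_fst_le[of "a1 - b1" "a2 - b2"] a b by simp
  have n2: "\<bar>a2 - b2\<bar> \<le> norm (a - b)" using norm_snd_le[of "a2 - b2" "a1 - b1"] a b by simp
  have g: "\<bar>(clampR R a1)^p - (clampR R b1)^p\<bar> \<le> p * R^(p-1) * \<bar>a1 - b1\<bar>"
  proof -
    have "\<bar>(clampR R a1)^p - (clampR R b1)^p\<bar> \<le> p * R^(p-1) * \<bar>clampR R a1 - clampR R b1\<bar>"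
      by (intro pow_lip clampR_bound assms)
    also have "\<dots> \<le> p * R^(p-1) * \<bar>a1 - b1\<bar>"
      by (intro mult_left_mono clampR_lip assms) (use assms in auto)
    finally show ?thesis .
  qed
  have "norm (FF mu alpha p R a - FF mu alpha p R b)
      = norm (a2 - b2, - mu * (a2 - b2) - alpha * ((clampR R a1)^p - (clampR R b1)^p))"
    by (simp add: FF_def a b algebra_simps)
  also have "\<dots> \<le> \<bar>a2 - b2\<bar> + \<bar>- mu * (a2 - b2) - alpha * ((clampR R a1)^p - (clampR R b1)^p)\<bar>"
    using norm_Pair_le by (metis real_norm_def)
  also have "\<dots> \<le> \<bar>a2 - b2\<bar> + (mu * \<bar>a2 - b2\<bar> + alpha * (p * R^(p-1) * \<bar>a1 - b1\<bar>))"
  proof -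
    have "\<bar>- mu * (a2 - b2) - alpha * ((clampR R a1)^p - (clampR R b1)^p)\<bar>
        \<le> \<bar>mu * (a2 - b2)\<bar> + \<bar>alpha * ((clampR R a1)^p - (clampR R b1)^p)\<bar>" by linarith
    also have "\<dots> = mu * \<bar>a2 - b2\<bar> + alpha * \<bar>(clampR R a1)^p - (clampR R b1)^p\<bar>"
      using assms by (simp add: abs_mult)
    also have "\<dots> \<le> mu * \<bar>a2 - b2\<bar> + alpha * (p * R^(p-1) * \<bar>a1 - b1\<bar>)"
      using g assms by (intro add_left_mono mult_left_mono) auto
    finally show ?thesis by linarith
  qed
  also have "\<dots> \<le> norm (a - b) + (mu * norm (a - b) + alpha * (p * R^(p-1) * norm (a - b)))"
    using n1 n2 assms
    by (intro add_mono mult_left_mono) (auto simp: zero_le_mult_iff)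
  also have "\<dots> = (1 + mu + alpha * p * R^(p-1)) * norm (a - b)" by (simp add: algebra_simps)
  finally show ?thesis .
qed

lemma vd_fst: "(Y has_vector_derivative Y') F \<Longrightarrow> ((\<lambda>t. fst (Y t)) has_real_derivative fst Y') F"
  unfolding has_vector_derivative_def has_field_derivative_def
  by (drule has_derivative_fst, erule has_derivative_eq_rhs) (auto simp: fun_eq_iff)

lemma vd_snd: "(Y has_vector_derivative Y') F \<Longrightarrow> ((\<lambda>t. snd (Y t)) has_real_derivative snd Y') F"
  unfolding has_vector_derivative_def has_field_derivative_def
  by (drule has_derivative_snd, erule has_derivative_eq_rhs) (auto simp: fun_eq_iff)

lemma deriv_interior:
  "0 < s \<Longrightarrow> (f has_real_derivative D) (at s within {0..}) \<Longrightarrow> (f has_real_derivative D) (at s)"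
  by (subst (asm) at_within_interior) auto

lemma energy_decr:
  fixes x v :: "real \<Rightarrow> real"
  assumes "a \<le> b" "mu \<ge> 0"
    and cx: "continuous_on {a..b} x" and cv: "continuous_on {a..b} v"
    and d: "\<And>s. a < s \<Longrightarrow> s < b \<Longrightarrow> (x has_real_derivative v s) (at s) \<and>
                  (v has_real_derivative (- mu * v s - alpha * x s ^ p)) (at s)"
  shows "v b ^ 2 / 2 + alpha * x b ^ (p+1) / (p+1) \<le> v a ^ 2 / 2 + alpha * x a ^ (p+1) / (p+1)"
proof -
  let ?E = "\<lambda>s. v s ^ 2 / 2 + alpha * x s ^ (p+1) / (p+1)"
  show ?thesis
  proof (rule DERIV_nonpos_imp_decreasing_open[of a b ?E])
    fix s assume s: "a < s" "s < b"
    let ?V = "- mu * v s - alpha * x s ^ p"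
    have h1: "((\<lambda>s. x s ^ (p+1)) has_real_derivative (real (p+1) * x s ^ p * v s)) (at s)"
      using DERIV_power[OF conjunct1[OF d[OF s]], of "p+1"] by (simp add: mult_ac del: power_Suc)
    have h2: "((\<lambda>s. v s ^ 2) has_real_derivative (real 2 * v s ^ 1 * ?V)) (at s)"
      using DERIV_power[OF conjunct2[OF d[OF s]], of 2] by (simp add: mult_ac)
    have "(?E has_real_derivative (real 2 * v s ^ 1 * ?V) / 2 + alpha * (real (p+1) * x s ^ p * v s) / (p+1)) (at s)"
      by (intro DERIV_add DERIV_cdivide DERIV_cmult h1 h2)
    moreover have "(real 2 * v s ^ 1 * ?V) / 2 + alpha * (real (p+1) * x s ^ p * v s) / (p+1) = - mu * v s ^ 2"
    proof -
      have "alpha * (real (p+1) * x s ^ p * v s) / (p+1) = alpha * x s ^ p * v s"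
        by (simp del: of_nat_Suc add: field_simps)
      then show ?thesis by (simp add: field_simps power2_eq_square)
    qed
    ultimately have "(?E has_real_derivative (- mu * v s ^ 2)) (at s)" by simp
    then show "\<exists>y. (?E has_real_derivative y) (at s) \<and> y \<le> 0" using assms by auto
  qed (use assms in \<open>auto intro!: continuous_intros\<close>)
qed

lemma existence:
  assumes "odd p" "mu \<ge> 0" "alpha > 0"
  shows "\<exists>x. ivp_solution mu alpha p x0 x1 x"
proof -
  have ev: "even (p+1)" using assms(1) by simp
  define R where "R = 1 + x0^(p+1) + (p+1) * x1^2 / alpha"
  have x0p: "x0^(p+1) \<ge> 0" using zero_le_even_power[OF ev] by blast
  have R1: "R \<ge> 1" unfolding R_def using x0p assms by (simp add: zero_le_divide_iff)
  define L where "L = 1 + mu + alpha * p * R^(p-1)"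
  have L1: "L \<ge> 1" unfolding L_def using assms R1 by simp
  obtain Y where Y0: "Y 0 = (x0, x1)"
    and dY: "\<forall>t\<ge>0. (Y has_vector_derivative FF mu alpha p R (Y t)) (at t within {0..})"
  proof -
    have lipF: "\<And>a b. norm (FF mu alpha p R a - FF mu alpha p R b) \<le> L * norm (a - b)"
      unfolding L_def using FF_lip assms R1 by auto
    show ?thesis using picard_exists[of "FF mu alpha p R" L "(x0, x1)", OF lipF L1] that by auto
  qed
  define x where "x t = fst (Y t)" for t
  define v where "v t = snd (Y t)" for t
  have dx: "(x has_real_derivative v t) (at t within {0..})" if "t \<ge> 0" for t
    using vd_fst[OF dY[rule_format, OF that]] unfolding x_def[abs_def] v_def by (simp add: FF_def)
  have dv: "(v has_real_derivative (- mu * v t - alpha * clampR R (x t) ^ p)) (at t within {0..})"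
    if "t \<ge> 0" for t
    using vd_snd[OF dY[rule_format, OF that]] unfolding x_def v_def[abs_def] by (simp add: FF_def)
  have cx: "continuous_on {0..} x" by (rule DERIV_continuous_on[OF dx]) auto
  have cv: "continuous_on {0..} v" by (rule DERIV_continuous_on[OF dv]) auto
  have bound: "\<bar>x t\<bar> \<le> R" if t0: "t \<ge> 0" for t
  proof (rule ccontr)
    assume "\<not> \<bar>x t\<bar> \<le> R"
    then have t1: "\<bar>x t\<bar> > R" by simp
    define S where "S = {0..t} \<inter> (\<lambda>s. \<bar>x s\<bar>) -` {R..}"
    have "continuous_on {0..t} (\<lambda>s. \<bar>x s\<bar>)"
      by (intro continuous_intros continuous_on_subset[OF cx]) auto
    then have clS: "closed S" unfolding S_def
      by (rule continuous_closed_preimage) auto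
    have tS: "t \<in> S" unfolding S_def using t0 t1 by auto
    have bdd: "bdd_below S" unfolding S_def by (rule bdd_belowI[of _ 0]) auto
    define ts where "ts = Inf S"
    have tsS: "ts \<in> S" unfolding ts_def using closed_contains_Inf[OF _ bdd clS] tS by auto
    then have ts0: "0 \<le> ts" "ts \<le> t" and Rts: "R \<le> \<bar>x ts\<bar>" unfolding S_def by auto
    have below: "\<bar>x s\<bar> < R" if "0 \<le> s" "s < ts" for s
    proof (rule ccontr)
      assume "\<not> \<bar>x s\<bar> < R"
      then have "s \<in> S" unfolding S_def using that ts0 by auto
      then have "ts \<le> s" unfolding ts_def using bdd by (rule cInf_lower)
      then show False using that by simp
    qed
    have "v ts ^ 2 / 2 + alpha * x ts ^ (p+1) / (p+1) \<le> v 0 ^ 2 / 2 + alpha * x 0 ^ (p+1) / (p+1)"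
    proof (rule energy_decr[OF ts0(1) assms(2)])
      show "continuous_on {0..ts} x" by (rule continuous_on_subset[OF cx]) auto
      show "continuous_on {0..ts} v" by (rule continuous_on_subset[OF cv]) auto
      fix s assume s: "0 < s" "s < ts"
      have cl: "clampR R (x s) = x s" using below[of s] s by (intro clampR_id) auto
      show "(x has_real_derivative v s) (at s) \<and> (v has_real_derivative - mu * v s - alpha * x s ^ p) (at s)"
        using deriv_interior[OF s(1) dx[of s]] deriv_interior[OF s(1) dv[of s]] s cl by auto
    qed
    moreover have "x 0 = x0" "v 0 = x1" using Y0 by (auto simp: x_def v_def)
    ultimately have E: "v ts ^ 2 / 2 + alpha * x ts ^ (p+1) / (p+1) \<le> x1 ^ 2 / 2 + alpha * x0 ^ (p+1) / (p+1)"
      by simp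
    have "R ^ (p+1) \<le> \<bar>x ts\<bar> ^ (p+1)" using Rts R1 by (intro power_mono) auto
    also have "\<dots> = x ts ^ (p+1)" by (rule power_even_abs[OF ev])
    finally have "R ^ (p+1) \<le> x ts ^ (p+1)" .
    moreover have "R \<le> R ^ (p+1)" using R1 by (intro self_le_power) auto
    ultimately have "alpha * R / (p+1) \<le> alpha * x ts ^ (p+1) / (p+1)"
      using assms by (intro divide_right_mono mult_left_mono) auto
    moreover have "0 \<le> v ts ^ 2 / 2" by simp
    ultimately have "alpha * R / (p+1) \<le> x1 ^ 2 / 2 + alpha * x0 ^ (p+1) / (p+1)" using E by linarith
    moreover have "alpha * R / (p+1) = alpha / (p+1) + alpha * x0^(p+1) / (p+1) + x1^2"
    proof -
      have aR: "alpha * R = alpha + alpha * x0^(p+1) + real (p+1) * x1^2"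
        unfolding R_def using assms by (simp add: field_simps)
      have "real (p+1) * x1^2 / real (p+1) = x1^2" by simp
      then show ?thesis unfolding aR add_divide_distrib by simp
    qed
    moreover have "alpha / (p+1) > 0" using assms by simp
    moreover have "x1^2 \<ge> 0" by simp
    ultimately show False by linarith
  qed
  define x'' where "x'' t = - mu * v t - alpha * clampR R (x t) ^ p" for t
  have "continuous_on {0..} x''"
    unfolding x''_def clampR_def by (intro continuous_intros cx cv)
  moreover have "x'' t + mu * v t + alpha * x t ^ p = 0" if "t > 0" for t
    using clampR_id[OF bound[of t]] that by (simp add: x''_def)
  moreover have "x 0 = x0" "v 0 = x1" using Y0 by (auto simp: x_def v_def)
  ultimately have "ivp_solution mu alpha p x0 x1 x"
    unfolding ivp_solution_def C2_nonneg_with_def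
    using dx dv by (intro exI[of _ v] exI[of _ x'']) (auto simp: x''_def)
  then show ?thesis by blast
qed

lemma two_ab: fixes u w :: real shows "2 * \<bar>u\<bar> * \<bar>w\<bar> \<le> u^2 + w^2"
proof -
  have "0 \<le> (\<bar>u\<bar> - \<bar>w\<bar>)^2" by simp
  then show ?thesis by (simp add: power2_eq_square algebra_simps)
qed

lemma key_ineq:
  fixes u w D c mu alpha :: real
  assumes "mu \<ge> 0" "alpha > 0" "c \<ge> 0" "\<bar>D\<bar> \<le> c * \<bar>w\<bar>"
  shows "2 * w * u + 2 * u * (- mu * u - alpha * D) \<le> (1 + alpha * c) * (w^2 + u^2)"
proof -
  have "0 \<le> (w - u)^2" by simp
  then have a: "2 * w * u \<le> w^2 + u^2" by (simp add: power2_eq_square algebra_simps)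
  have b: "- (2 * mu * u * u) \<le> 0" using assms by simp
  have "- (2 * u * alpha * D) \<le> 2 * alpha * (\<bar>u\<bar> * \<bar>D\<bar>)"
  proof -
    have "- (2 * u * alpha * D) \<le> \<bar>2 * u * alpha * D\<bar>" by linarith
    also have "\<bar>2 * u * alpha * D\<bar> = 2 * alpha * (\<bar>u\<bar> * \<bar>D\<bar>)" using assms by (simp add: abs_mult)
    finally show ?thesis .
  qed
  also have "\<dots> \<le> 2 * alpha * (\<bar>u\<bar> * (c * \<bar>w\<bar>))"
    using assms by (intro mult_left_mono) auto
  also have "\<dots> = alpha * c * (2 * \<bar>u\<bar> * \<bar>w\<bar>)" by (simp add: algebra_simps)
  also have "\<dots> \<le> alpha * c * (w^2 + u^2)"
    using two_ab[of u w] assms by (intro mult_left_mono) auto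
  finally have c: "- (2 * u * alpha * D) \<le> alpha * c * (w^2 + u^2)" .
  have "2 * w * u + 2 * u * (- mu * u - alpha * D) = 2 * w * u - (2 * mu * u * u) - (2 * u * alpha * D)"
    by (simp add: algebra_simps)
  then show ?thesis using a b c by (simp add: algebra_simps)
qed

lemma uniqueness:
  assumes "mu \<ge> 0" "alpha > 0" and sx: "ivp_solution mu alpha p x0 x1 x"
    and sy: "ivp_solution mu alpha p x0 x1 y" and T: "T \<ge> 0"
  shows "y T = x T"
proof -
  obtain x' x'' where dx: "\<forall>t\<ge>0. (x has_real_derivative x' t) (at t within {0..}) \<and> (x' has_real_derivative x'' t) (at t within {0..})"
    and ex: "\<forall>t>0. x'' t + mu * x' t + alpha * x t ^ p = 0" and ix: "x 0 = x0" "x' 0 = x1"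
    using sx unfolding ivp_solution_def C2_nonneg_with_def by blast
  obtain y' y'' where dy: "\<forall>t\<ge>0. (y has_real_derivative y' t) (at t within {0..}) \<and> (y' has_real_derivative y'' t) (at t within {0..})"
    and ey: "\<forall>t>0. y'' t + mu * y' t + alpha * y t ^ p = 0" and iy: "y 0 = x0" "y' 0 = x1"
    using sy unfolding ivp_solution_def C2_nonneg_with_def by blast
  show ?thesis
  proof (cases "T = 0")
    case True then show ?thesis using ix iy by simp
  next
    case False
    then have T0: "T > 0" using T by simp
    have cx: "continuous_on {0..} x" by (rule DERIV_continuous_on) (use dx in auto)
    have cx': "continuous_on {0..} x'" by (rule DERIV_continuous_on) (use dx in auto)
    have cy: "continuous_on {0..} y" by (rule DERIV_continuous_on) (use dy in auto)
    have cy': "continuous_on {0..} y'" by (rule DERIV_continuous_on) (use dy in auto)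
    have "bounded (x ` {0..T})"
      by (intro compact_imp_bounded compact_continuous_image continuous_on_subset[OF cx]) auto
    then obtain Mx where Mx: "\<forall>z\<in>x ` {0..T}. norm z \<le> Mx" by (auto simp: bounded_iff)
    have "bounded (y ` {0..T})"
      by (intro compact_imp_bounded compact_continuous_image continuous_on_subset[OF cy]) auto
    then obtain My where My: "\<forall>z\<in>y ` {0..T}. norm z \<le> My" by (auto simp: bounded_iff)
    define M where "M = max 0 (max Mx My)"
    have M0: "M \<ge> 0" unfolding M_def by simp
    have xM: "\<bar>x s\<bar> \<le> M" if "s \<in> {0..T}" for s using Mx that unfolding M_def by force
    have yM: "\<bar>y s\<bar> \<le> M" if "s \<in> {0..T}" for s using My that unfolding M_def by force
    define c where "c = p * M^(p-1)"
    have c0: "c \<ge> 0" unfolding c_def using M0 by simp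
    define K where "K = 1 + alpha * c"
    define \<Phi> where "\<Phi> s = (y s - x s)^2 + (y' s - x' s)^2" for s
    define \<Psi> where "\<Psi> s = exp (- (K * s)) * \<Phi> s" for s
    have "\<Psi> T \<le> \<Psi> 0"
    proof (rule DERIV_nonpos_imp_decreasing_open[of 0 T \<Psi>])
      fix s assume s: "0 < s" "s < T"
      have dxs: "(x has_real_derivative x' s) (at s)" and dx's: "(x' has_real_derivative x'' s) (at s)"
        using deriv_interior[OF s(1)] dx s by auto
      have dys: "(y has_real_derivative y' s) (at s)" and dy's: "(y' has_real_derivative y'' s) (at s)"
        using deriv_interior[OF s(1)] dy s by auto
      let ?w = "y s - x s" and ?u = "y' s - x' s"
      have hP: "(\<Phi> has_real_derivative 2 * ?w * ?u + 2 * ?u * (y'' s - x'' s)) (at s)"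
        unfolding \<Phi>_def[abs_def]
        by (rule DERIV_cong[OF DERIV_add[OF DERIV_power[OF DERIV_diff[OF dys dxs], of 2]
              DERIV_power[OF DERIV_diff[OF dy's dx's], of 2]]]) (simp add: algebra_simps)
      have he: "((\<lambda>s. exp (- (K * s))) has_real_derivative exp (- (K * s)) * (- K)) (at s)"
        by (intro derivative_eq_intros) auto
      have hQ: "(\<Psi> has_real_derivative exp (- (K * s)) * (- K) * \<Phi> s + exp (- (K * s)) * (2 * ?w * ?u + 2 * ?u * (y'' s - x'' s))) (at s)"
        unfolding \<Psi>_def[abs_def] by (rule DERIV_cong[OF DERIV_mult[OF he hP]]) simp
      have eqd: "y'' s - x'' s = - mu * ?u - alpha * (y s ^ p - x s ^ p)"
      proof -
        have hx: "x'' s = - mu * x' s - alpha * x s ^ p" using ex s by (auto simp: algebra_simps)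
        have hy: "y'' s = - mu * y' s - alpha * y s ^ p" using ey s by (auto simp: algebra_simps)
        show ?thesis unfolding hx hy by (simp add: algebra_simps)
      qed
      have D: "\<bar>y s ^ p - x s ^ p\<bar> \<le> c * \<bar>?w\<bar>"
        unfolding c_def using pow_lip[OF yM xM, of s s p] s by simp
      have "2 * ?w * ?u + 2 * ?u * (y'' s - x'' s) \<le> K * \<Phi> s"
        unfolding eqd K_def \<Phi>_def by (rule key_ineq[OF assms(1,2) c0 D])
      then have "exp (- (K * s)) * (2 * ?w * ?u + 2 * ?u * (y'' s - x'' s)) \<le> exp (- (K * s)) * (K * \<Phi> s)"
        by (intro mult_left_mono) auto
      then have "exp (- (K * s)) * (- K) * \<Phi> s + exp (- (K * s)) * (2 * ?w * ?u + 2 * ?u * (y'' s - x'' s)) \<le> 0"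
        by (simp add: algebra_simps)
      with hQ show "\<exists>d. (\<Psi> has_real_derivative d) (at s) \<and> d \<le> 0" by blast
    next
      show "continuous_on {0..T} \<Psi>" unfolding \<Psi>_def \<Phi>_def
        by (intro continuous_intros continuous_on_subset[OF cx] continuous_on_subset[OF cy]
            continuous_on_subset[OF cx'] continuous_on_subset[OF cy']) auto
    qed (use T in auto)
    moreover have "\<Psi> 0 = 0" unfolding \<Psi>_def \<Phi>_def using ix iy by simp
    ultimately have "exp (- (K * T)) * \<Phi> T \<le> 0" unfolding \<Psi>_def by simp
    then have "\<Phi> T \<le> 0" by (simp add: mult_le_0_iff)
    moreover have "0 \<le> (y' T - x' T)^2" by simp
    ultimately have "(y T - x T)^2 \<le> 0" unfolding \<Phi>_def by linarith
    then show ?thesis by simp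
  qed
qed

lemma E_deriv:
  fixes x v :: "real \<Rightarrow> real"
  assumes "(x has_real_derivative v s) (at s)" "(v has_real_derivative V) (at s)"
  shows "((\<lambda>s. v s ^ 2 / 2 + alpha * x s ^ (p+1) / (p+1)) has_real_derivative
            (v s * V + alpha * x s ^ p * v s)) (at s)"
proof -
  have h1: "((\<lambda>s. x s ^ (p+1)) has_real_derivative (real (p+1) * x s ^ p * v s)) (at s)"
    using DERIV_power[OF assms(1), of "p+1"] by (simp add: mult_ac del: power_Suc)
  have h2: "((\<lambda>s. v s ^ 2) has_real_derivative (real 2 * v s ^ 1 * V)) (at s)"
    using DERIV_power[OF assms(2), of 2] by (simp add: mult_ac)
  have D: "((\<lambda>s. v s ^ 2 / 2 + alpha * x s ^ (p+1) / (p+1)) has_real_derivative (real 2 * v s ^ 1 * V) / 2 + alpha * (real (p+1) * x s ^ p * v s) / (p+1)) (at s)"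
    by (intro DERIV_add DERIV_cdivide DERIV_cmult h1 h2)
  have Q: "(real 2 * v s ^ 1 * V) / 2 + alpha * (real (p+1) * x s ^ p * v s) / (p+1) = v s * V + alpha * x s ^ p * v s"
  proof -
    have "alpha * (real (p+1) * x s ^ p * v s) / (p+1) = alpha * x s ^ p * v s"
      by (simp del: of_nat_Suc add: field_simps)
    then show ?thesis by simp
  qed
  show ?thesis by (rule DERIV_cong[OF D Q])
qed

lemma powr_bound:
  fixes A X H E0 th c2 :: real
  assumes A0: "0 \<le> A" and AE: "A \<le> 2 * E0" and H0: "0 < H"
    and HA: "H \<le> 2 * c2 * (A + \<bar>X\<bar> ^ (p+1))" and c2: "c2 > 0"
    and th: "th = (real p - 1) / (real p + 1)" and p: "p \<ge> 1"
  shows "H powr (1 + th) \<le> (4 * c2) powr (1 + th) * max 1 ((2 * E0) powr th) * (A + X ^ (2*p))"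
proof -
  define B where "B = \<bar>X\<bar> ^ (p+1)"
  have B0: "B \<ge> 0" unfolding B_def by simp
  have th0: "th \<ge> 0" unfolding th using p by simp
  have X2p: "X ^ (2*p) \<ge> 0" by (simp add: power_mult)
  have "A + B \<le> 2 * max A B" by (simp add: max_def)
  then have "2 * c2 * (A + B) \<le> 2 * c2 * (2 * max A B)" using c2 by (intro mult_left_mono) auto
  then have "H \<le> 4 * c2 * max A B" using HA unfolding B_def by simp
  then have "H powr (1 + th) \<le> (4 * c2 * max A B) powr (1 + th)"
    using H0 th0 by (intro powr_mono2) auto
  also have "\<dots> = (4 * c2) powr (1 + th) * (max A B) powr (1 + th)"
    by (rule powr_mult)
  also have "\<dots> \<le> (4 * c2) powr (1 + th) * (max 1 ((2 * E0) powr th) * (A + X ^ (2*p)))"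
  proof (intro mult_left_mono)
    show "0 \<le> (4 * c2) powr (1 + th)" by simp
    show "max A B powr (1 + th) \<le> max 1 ((2 * E0) powr th) * (A + X ^ (2 * p))"
    proof (cases "B \<le> A")
      case True
      then have mA: "max A B = A" by simp
      show ?thesis
      proof (cases "A = 0")
        case True then show ?thesis using mA X2p by simp
      next
        case False
        then have Ap: "A > 0" using A0 by simp
        have "A powr (1 + th) = A * A powr th" using Ap by (simp add: powr_add)
        also have "\<dots> \<le> A * (2 * E0) powr th" using Ap AE th0 by (intro mult_left_mono powr_mono2) auto
        also have "\<dots> \<le> A * max 1 ((2 * E0) powr th)" using Ap by (intro mult_left_mono) auto
        also have "\<dots> \<le> (A + X ^ (2*p)) * max 1 ((2 * E0) powr th)" using X2p by (intro mult_right_mono) auto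
        finally show ?thesis using mA by (simp add: mult_ac)
      qed
    next
      case False
      then have mB: "max A B = B" and BA: "A < B" by auto
      then have "B > 0" using A0 by simp
      then have Xp: "\<bar>X\<bar> > 0" unfolding B_def by (cases "X = 0") auto
      have "B powr (1 + th) = (\<bar>X\<bar> powr real (p+1)) powr (1 + th)"
        unfolding B_def using powr_realpow[OF Xp, of "p+1"] by simp
      also have "\<dots> = \<bar>X\<bar> powr (real (p+1) * (1 + th))" by (simp add: powr_powr)
      also have "real (p+1) * (1 + th) = real (2*p)" unfolding th using p by (simp add: field_simps)
      also have "\<bar>X\<bar> powr real (2*p) = \<bar>X\<bar> ^ (2*p)" by (rule powr_realpow[OF Xp])
      also have "\<dots> = X ^ (2*p)" by (simp add: power_even_abs)
      also have "\<dots> \<le> 1 * (A + X ^ (2*p))" using A0 by simp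
      also have "\<dots> \<le> max 1 ((2 * E0) powr th) * (A + X ^ (2*p))"
        using A0 X2p by (intro mult_right_mono) auto
      finally show ?thesis using mB by simp
    qed
  qed
  finally show ?thesis by (simp add: mult_ac)
qed

lemma aux_frac: "b \<noteq> 0 \<Longrightarrow> c \<noteq> 0 \<Longrightarrow> - 1 / (b / c) * (1 / c) = - 1 / (b::real)"
  by (simp add: field_simps)

lemma decay:
  assumes p: "odd p" "p \<ge> 3" and mu: "mu > 0" and al: "alpha > 0"
    and sol: "ivp_solution mu alpha p x0 x1 x"
  shows "\<exists>C>0. \<forall>t>0. \<bar>x t\<bar> \<le> C * t powr (- 1 / (real p - 1))"
proof -
  obtain v x'' where d: "\<forall>t\<ge>0. (x has_real_derivative v t) (at t within {0..}) \<and> (v has_real_derivative x'' t) (at t within {0..})"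
    and eq: "\<forall>t>0. x'' t + mu * v t + alpha * x t ^ p = 0"
    using sol unfolding ivp_solution_def C2_nonneg_with_def by blast
  have ev: "even (p+1)" using p by simp
  have dxs: "(x has_real_derivative v s) (at s)" if "s > 0" for s
    using deriv_interior[OF that] d that by auto
  have dvs: "(v has_real_derivative (- mu * v s - alpha * x s ^ p)) (at s)" if "s > 0" for s
  proof -
    have "x'' s = - mu * v s - alpha * x s ^ p" using eq that by (auto simp: algebra_simps)
    moreover have "(v has_real_derivative x'' s) (at s)" using deriv_interior[OF that] d that by auto
    ultimately show ?thesis by simp
  qed
  have cx: "continuous_on {0..} x" by (rule DERIV_continuous_on) (use d in auto)
  have cv: "continuous_on {0..} v" by (rule DERIV_continuous_on) (use d in auto)
  define E where "E s = v s ^ 2 / 2 + alpha * x s ^ (p+1) / (p+1)" for s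
  define E0 where "E0 = E 0"
  have Emono: "E b \<le> E a" if "0 \<le> a" "a \<le> b" for a b
    unfolding E_def
  proof (rule energy_decr[OF that(2) less_imp_le[OF mu]])
    show "continuous_on {a..b} x" by (rule continuous_on_subset[OF cx]) (use that in auto)
    show "continuous_on {a..b} v" by (rule continuous_on_subset[OF cv]) (use that in auto)
    fix s assume "a < s" "s < b"
    then have "s > 0" using that by simp
    then show "(x has_real_derivative v s) (at s) \<and> (v has_real_derivative - mu * v s - alpha * x s ^ p) (at s)"
      using dxs dvs by auto
  qed
  have xp1: "0 \<le> x s ^ (p+1)" for s using zero_le_even_power[OF ev] by blast
  have Ev: "v s ^ 2 \<le> 2 * E s" for s unfolding E_def using xp1[of s] al by simp
  have Exa: "alpha * x s ^ (p+1) \<le> (p+1) * E s" for s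
  proof -
    have "alpha * x s ^ (p+1) / (p+1) \<le> E s" unfolding E_def by simp
    then show ?thesis by (simp add: field_simps)
  qed
  have Ex: "x s ^ (p+1) \<le> (p+1) * E s / alpha" for s
    using Exa[of s] al by (simp add: field_simps)
  have E_nn: "0 \<le> E s" for s unfolding E_def using xp1[of s] al by simp
  have EE0: "E s \<le> E0" if "s \<ge> 0" for s unfolding E0_def using Emono[of 0 s] that by simp
  have E00: "E0 \<ge> 0" using E_nn unfolding E0_def by simp
  define M where "M = max 1 ((p+1) * E0 / alpha)"
  have M1: "M \<ge> 1" unfolding M_def by simp
  have xM: "x s ^ (p-1) \<le> M" if "s \<ge> 0" for s
  proof (cases "\<bar>x s\<bar> \<le> 1")
    case True
    have "x s ^ (p-1) = \<bar>x s\<bar> ^ (p-1)" using p by (simp add: power_even_abs)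
    also have "\<dots> \<le> 1" using True by (simp add: power_le_one)
    finally show ?thesis using M1 by simp
  next
    case False
    have "x s ^ (p-1) = \<bar>x s\<bar> ^ (p-1)" using p by (simp add: power_even_abs)
    also have "\<dots> \<le> \<bar>x s\<bar> ^ (p+1)" using False by (intro power_increasing) auto
    also have "\<dots> = x s ^ (p+1)" by (rule power_even_abs[OF ev])
    also have "\<dots> \<le> (p+1) * E s / alpha" by (rule Ex)
    also have "\<dots> \<le> (p+1) * E0 / alpha" using EE0[OF that] al by (intro divide_right_mono mult_left_mono) auto
    also have "\<dots> \<le> M" unfolding M_def by simp
    finally show ?thesis .
  qed
  have pw: "x s ^ (2*p) = x s ^ (p-1) * x s ^ (p+1)" for s
  proof -
    have "2*p = (p-1) + (p+1)" using p by simp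
    then show ?thesis by (metis power_add)
  qed
  have x2p: "x s ^ (2*p) \<le> M * x s ^ (p+1)" if "s \<ge> 0" for s
    unfolding pw using xM[OF that] xp1[of s] by (intro mult_right_mono) auto
  have x2p0: "0 \<le> x s ^ (2*p)" for s by (simp add: power_mult)
  define c1 where "c1 = M * (p+1) / (2*alpha) + 1"
  have c1pos: "c1 > 0" unfolding c1_def using M1 al by (simp add: add_pos_nonneg)
  have xpv: "\<bar>x s ^ p * v s\<bar> \<le> c1 * E s" if "s \<ge> 0" for s
  proof -
    have "2 * \<bar>x s ^ p\<bar> * \<bar>v s\<bar> \<le> (x s ^ p)^2 + v s ^ 2" by (rule two_ab)
    also have "(x s ^ p)^2 = x s ^ (2*p)" by (simp add: power_mult[symmetric] mult.commute)
    finally have "2 * \<bar>x s ^ p * v s\<bar> \<le> x s ^ (2*p) + v s ^ 2" by (simp add: abs_mult)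
    also have "\<dots> \<le> M * ((p+1) * E s / alpha) + 2 * E s"
    proof -
      have "M * x s ^ (p+1) \<le> M * ((p+1) * E s / alpha)" using Ex[of s] M1 by (intro mult_left_mono) auto
      then show ?thesis using x2p[OF that] Ev[of s] by linarith
    qed
    also have "\<dots> = 2 * (c1 * E s)" unfolding c1_def using al by (simp add: field_simps)
    finally show ?thesis by simp
  qed
  define \<delta> where "\<delta> = min (1/(2*c1)) (min (mu/(4*p*M)) (alpha/(2*mu)))"
  have p0: "real p > 0" using p by simp
  have dpos: "\<delta> > 0" unfolding \<delta>_def using c1pos mu al M1 p0 by simp
  have d1: "\<delta> * c1 \<le> 1/2"
  proof -
    have "\<delta> \<le> 1/(2*c1)" unfolding \<delta>_def by simp
    then show ?thesis using c1pos by (simp add: field_simps)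
  qed
  have d2: "\<delta> * p * M \<le> mu/4"
  proof -
    have "\<delta> \<le> mu/(4*p*M)" unfolding \<delta>_def by simp
    then show ?thesis using p0 M1 by (simp add: field_simps)
  qed
  have d3: "\<delta> * mu \<le> alpha/2"
  proof -
    have "\<delta> \<le> alpha/(2*mu)" unfolding \<delta>_def by simp
    then show ?thesis using mu by (simp add: field_simps)
  qed
  define H where "H s = E s + \<delta> * (x s ^ p * v s)" for s
  have HE: "E s / 2 \<le> H s \<and> H s \<le> 2 * E s" if "s \<ge> 0" for s
  proof -
    have "\<bar>\<delta> * (x s ^ p * v s)\<bar> \<le> \<delta> * (c1 * E s)"
      using xpv[OF that] dpos by (simp add: abs_mult mult_left_mono)
    also have "\<dots> = (\<delta> * c1) * E s" by simp
    also have "\<dots> \<le> 1/2 * E s" using d1 E_nn[of s] by (intro mult_right_mono) auto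
    finally have "\<bar>\<delta> * (x s ^ p * v s)\<bar> \<le> E s / 2" by simp
    then have "\<delta> * (x s ^ p * v s) \<le> E s / 2 \<and> - (\<delta> * (x s ^ p * v s)) \<le> E s / 2"
      by (simp only: abs_le_iff)
    then show ?thesis unfolding H_def using E_nn[of s] by linarith
  qed
  define m where "m = min (mu/2) (\<delta>*alpha/2)"
  have mpos: "m > 0" unfolding m_def using mu dpos al by simp
  define Hd where "Hd s = v s * (- mu * v s - alpha * x s ^ p) + alpha * x s ^ p * v s
     + \<delta> * (real p * x s ^ (p - 1) * v s * v s + x s ^ p * (- mu * v s - alpha * x s ^ p))" for s
  have dH: "(H has_real_derivative Hd s) (at s)" if "s > 0" for s
  proof -
    have h1: "((\<lambda>s. v s ^ 2 / 2 + alpha * x s ^ (p+1) / (p+1)) has_real_derivative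
            (v s * (- mu * v s - alpha * x s ^ p) + alpha * x s ^ p * v s)) (at s)"
      by (rule E_deriv[OF dxs[OF that] dvs[OF that]])
    have h2: "((\<lambda>s. x s ^ p * v s) has_real_derivative (real p * x s ^ (p - 1) * v s * v s + x s ^ p * (- mu * v s - alpha * x s ^ p))) (at s)"
      by (rule DERIV_cong[OF DERIV_mult[OF DERIV_power[OF dxs[OF that], of p] dvs[OF that]]]) simp
    show ?thesis unfolding H_def[abs_def] E_def[abs_def] Hd_def
      by (intro DERIV_add h1 DERIV_cmult h2)
  qed
  have Hdle: "Hd s \<le> - m * (v s ^ 2 + x s ^ (2*p))" if "s > 0" for s
  proof -
    let ?a = "x s" and ?b = "v s"
    have sq: "?a ^ (2*p) = ?a ^ p * ?a ^ p" by (simp add: mult_2 power_add)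
    have xm0: "0 \<le> ?a ^ (p - 1)" using p by (simp add: zero_le_even_power)
    have F1: "\<delta> * p * ?a ^ (p - 1) * ?b ^ 2 \<le> mu / 4 * ?b ^ 2"
    proof -
      have "\<delta> * p * ?a ^ (p - 1) \<le> \<delta> * p * M"
        using xM[of s] that dpos p0 by (intro mult_left_mono) auto
      then have "\<delta> * p * ?a ^ (p - 1) \<le> mu / 4" using d2 by linarith
      then show ?thesis by (intro mult_right_mono) auto
    qed
    have G: "- (2 * alpha * mu * (?a ^ p * ?b)) \<le> alpha ^ 2 * ?a ^ (2*p) + mu ^ 2 * ?b ^ 2"
    proof -
      have "0 \<le> (alpha * ?a ^ p + mu * ?b) ^ 2" by simp
      then show ?thesis unfolding sq by (simp add: power2_eq_square algebra_simps)
    qed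
    have F2: "- (\<delta> * mu * (?a ^ p * ?b)) \<le> \<delta> * alpha / 2 * ?a ^ (2*p) + \<delta> * mu ^ 2 / (2 * alpha) * ?b ^ 2"
    proof -
      have "- (mu * (?a ^ p * ?b)) \<le> alpha / 2 * ?a ^ (2*p) + mu ^ 2 / (2 * alpha) * ?b ^ 2"
        using G al by (simp add: field_simps power2_eq_square)
      then have "\<delta> * (- (mu * (?a ^ p * ?b))) \<le> \<delta> * (alpha / 2 * ?a ^ (2*p) + mu ^ 2 / (2 * alpha) * ?b ^ 2)"
        using dpos by (intro mult_left_mono) auto
      then show ?thesis by (simp add: algebra_simps)
    qed
    have F3: "\<delta> * mu ^ 2 / (2 * alpha) * ?b ^ 2 \<le> mu / 4 * ?b ^ 2"
    proof -
      have "\<delta> * mu ^ 2 / (2 * alpha) = (\<delta> * mu) * mu / (2 * alpha)" by (simp add: power2_eq_square)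
      also have "\<dots> \<le> (alpha / 2) * mu / (2 * alpha)"
        using d3 mu al by (intro divide_right_mono mult_right_mono) auto
      also have "\<dots> = mu / 4" using al by simp
      finally show ?thesis by (intro mult_right_mono) auto
    qed
    have Hd_eq: "Hd s = - mu * ?b ^ 2 + \<delta> * p * ?a ^ (p - 1) * ?b ^ 2 - \<delta> * mu * (?a ^ p * ?b) - \<delta> * alpha * ?a ^ (2*p)"
      unfolding Hd_def sq by (simp add: algebra_simps power2_eq_square)
    have "Hd s \<le> - (mu / 2) * ?b ^ 2 - (\<delta> * alpha / 2) * ?a ^ (2*p)"
    proof -
      have e1: "mu / 4 * ?b^2 = (mu * ?b^2)/4" by simp
      have e2: "\<delta> * alpha / 2 * ?a^(2*p) = (\<delta> * alpha * ?a^(2*p))/2" by simp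
      have e3: "- (mu / 2) * ?b^2 = - ((mu * ?b^2)/2)" by simp
      show ?thesis using F1 F2 F3 unfolding Hd_eq e1 e2 e3 by linarith
    qed
    also have "\<dots> \<le> - m * ?b ^ 2 - m * ?a ^ (2*p)"
    proof -
      have "m * ?b ^ 2 \<le> (mu / 2) * ?b ^ 2" unfolding m_def by (intro mult_right_mono) auto
      moreover have "m * ?a ^ (2*p) \<le> (\<delta> * alpha / 2) * ?a ^ (2*p)"
        unfolding m_def using x2p0[of s] by (intro mult_right_mono) auto
      ultimately show ?thesis by linarith
    qed
    finally show ?thesis by (simp add: algebra_simps)
  qed
  define th where "th = (real p - 1) / (real p + 1)"
  have th0: "th > 0" unfolding th_def using p by simp
  define c2 where "c2 = 1 + alpha"
  have c2pos: "c2 > 0" unfolding c2_def using al by simp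
  define Cst where "Cst = (4 * c2) powr (1 + th) * max 1 ((2 * E0) powr th)"
  have Cpos: "Cst > 0" unfolding Cst_def using c2pos by (intro mult_pos_pos) auto
  have Hpow: "H s powr (1 + th) \<le> Cst * (v s ^ 2 + x s ^ (2*p))" if s0: "s \<ge> 0" and Hs: "H s > 0" for s
  proof -
    have xabs: "\<bar>x s\<bar> ^ (p+1) = x s ^ (p+1)" by (rule power_even_abs[OF ev])
    have "E s \<le> c2 * (v s ^ 2 + \<bar>x s\<bar> ^ (p+1))"
    proof -
      have "(1/2) * v s ^ 2 \<le> c2 * v s ^ 2" unfolding c2_def using al by (intro mult_right_mono) auto
      then have "v s ^ 2 / 2 \<le> c2 * v s ^ 2" by simp
      moreover have "alpha * x s ^ (p+1) / (p+1) \<le> alpha * x s ^ (p+1)"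
      proof -
        have "alpha * x s ^ (p+1) / real (p+1) \<le> alpha * x s ^ (p+1) / 1"
          using al xp1[of s] by (intro divide_left_mono) auto
        then show ?thesis by simp
      qed
      moreover have "alpha * x s ^ (p+1) \<le> c2 * x s ^ (p+1)" unfolding c2_def using xp1[of s] by (intro mult_right_mono) auto
      ultimately show ?thesis unfolding E_def xabs by (simp add: algebra_simps)
    qed
    then have HB: "H s \<le> 2 * c2 * (v s ^ 2 + \<bar>x s\<bar> ^ (p+1))" using HE[OF s0] by simp
    have vE: "v s ^ 2 \<le> 2 * E0" using Ev[of s] EE0[OF s0] by simp
    have "H s powr (1 + th) \<le> (4 * c2) powr (1 + th) * max 1 ((2 * E0) powr th) * (v s ^ 2 + x s ^ (2*p))"
      by (rule powr_bound[OF _ vE Hs HB c2pos th_def]) (use p in auto)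
    then show ?thesis unfolding Cst_def .
  qed
  define k where "k = th * m / Cst"
  have kpos: "k > 0" unfolding k_def using th0 mpos Cpos by simp
  define C where "C = (2 * (p+1) / alpha) powr (1 / (p+1)) * k powr (- 1 / (real p - 1))"
  have Cp: "C > 0" unfolding C_def using al kpos by (intro mult_pos_pos) auto
  show ?thesis
  proof (intro exI[of _ C] conjI allI impI)
    show "C > 0" by (rule Cp)
    fix t :: real assume t: "t > 0"
    have rhs0: "0 \<le> C * t powr (- 1 / (real p - 1))" using Cp by simp
    show "\<bar>x t\<bar> \<le> C * t powr (- 1 / (real p - 1))"
    proof (cases "H t > 0")
      case False
      then have "E t \<le> 0" using HE[of t] t by linarith
      then have "alpha * x t ^ (p+1) \<le> 0" using Exa[of t] by (smt (verit) of_nat_0_le_iff mult_nonneg_nonpos)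
      then have "x t ^ (p+1) \<le> 0" using al by (simp add: mult_le_0_iff)
      then have "x t ^ (p+1) = 0" using xp1[of t] by linarith
      then have "x t = 0" by (metis power_eq_0_iff)
      then show ?thesis using rhs0 by simp
    next
      case True
      have Hpos: "H s > 0" if "0 \<le> s" "s \<le> t" for s
      proof -
        have "E t > 0" using HE[of t] t True by linarith
        moreover have "E t \<le> E s" using Emono that by blast
        ultimately show ?thesis using HE[of s] that by linarith
      qed
      define \<Phi> where "\<Phi> s = H s powr (- th)" for s
      have cH: "continuous_on {0..t} H" unfolding H_def[abs_def] E_def[abs_def]
        by (intro continuous_intros continuous_on_subset[OF cx] continuous_on_subset[OF cv]) auto
      have "\<Phi> 0 - k * 0 \<le> \<Phi> t - k * t"
      proof (rule DERIV_nonneg_imp_increasing_open[of 0 t "\<lambda>s. \<Phi> s - k * s"])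
        fix s assume s: "0 < s" "s < t"
        have Hs: "H s > 0" using Hpos s by simp
        have dPhi: "(\<Phi> has_real_derivative (- th) * H s powr (- th - 1) * Hd s) (at s)"
          unfolding \<Phi>_def[abs_def] using DERIV_fun_powr[OF dH[of s] Hs, of "- th"] s by simp
        define P where "P = H s powr (- th - 1)"
        have Ppos: "P > 0" unfolding P_def using Hs by simp
        have PH: "P * H s powr (1 + th) = 1"
          unfolding P_def using Hs by (simp add: powr_add[symmetric])
        have "k = th * m / Cst * (P * H s powr (1 + th))" using PH unfolding k_def by simp
        also have "\<dots> = th * P * m * (H s powr (1 + th) / Cst)" by (simp add: field_simps)
        also have "\<dots> \<le> th * P * m * (v s ^ 2 + x s ^ (2*p))"
          using Hpow[of s] s Hs Cpos th0 Ppos mpos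
          by (intro mult_left_mono) (auto simp: divide_le_eq mult.commute)
        also have "\<dots> = (- th * P) * (- m * (v s ^ 2 + x s ^ (2*p)))" by (simp add: algebra_simps)
        also have "\<dots> \<le> (- th * P) * Hd s"
          using Hdle[of s] s th0 Ppos by (intro mult_left_mono_neg) auto
        finally have kle: "k \<le> (- th) * H s powr (- th - 1) * Hd s" unfolding P_def by simp
        have dk: "((\<lambda>s. k * s) has_real_derivative k) (at s)"
          using DERIV_cmult[OF DERIV_ident, of k] by simp
        show "\<exists>y. ((\<lambda>s. \<Phi> s - k * s) has_real_derivative y) (at s) \<and> 0 \<le> y"
          using DERIV_diff[OF dPhi dk] kle by auto
      next
        show "continuous_on {0..t} (\<lambda>s. \<Phi> s - k * s)" unfolding \<Phi>_def
          by (intro continuous_on_diff continuous_on_powr cH continuous_intros) (use Hpos in force)+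
      qed (use t in auto)
      moreover have "\<Phi> 0 \<ge> 0" unfolding \<Phi>_def by simp
      ultimately have Phit: "k * t \<le> \<Phi> t" by simp
      have "H t = (H t powr (- th)) powr (- 1 / th)"
        using th0 True by (simp add: powr_powr)
      also have "\<dots> \<le> (k * t) powr (- 1 / th)"
        using Phit kpos t th0 unfolding \<Phi>_def by (intro powr_mono2') auto
      finally have Ht: "H t \<le> (k * t) powr (- 1 / th)" .
      have xb: "\<bar>x t\<bar> ^ (p+1) \<le> (2 * (p+1) / alpha) * (k * t) powr (- 1 / th)"
      proof -
        have "\<bar>x t\<bar> ^ (p+1) = x t ^ (p+1)" by (rule power_even_abs[OF ev])
        also have "\<dots> \<le> (p+1) * E t / alpha" by (rule Ex)
        also have "\<dots> \<le> (p+1) * (2 * H t) / alpha"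
          using HE[of t] t al by (intro divide_right_mono mult_left_mono) auto
        also have "\<dots> \<le> (p+1) * (2 * (k * t) powr (- 1 / th)) / alpha"
          using Ht al by (intro divide_right_mono mult_left_mono) auto
        also have "\<dots> = (2 * (p+1) / alpha) * (k * t) powr (- 1 / th)" by simp
        finally show ?thesis .
      qed
      show ?thesis
      proof (cases "x t = 0")
        case True then show ?thesis using rhs0 by simp
      next
        case False
        then have xa: "\<bar>x t\<bar> > 0" by simp
        have "\<bar>x t\<bar> = (\<bar>x t\<bar> ^ (p+1)) powr (1 / real (p+1))"
        proof -
          have "(\<bar>x t\<bar> ^ (p+1)) powr (1 / real (p+1)) = (\<bar>x t\<bar> powr real (p+1)) powr (1 / real (p+1))"
            by (simp only: powr_realpow[OF xa])
          also have "\<dots> = \<bar>x t\<bar> powr (real (p+1) * (1 / real (p+1)))" by (simp only: powr_powr)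
          also have "real (p+1) * (1 / real (p+1)) = 1" by (simp del: of_nat_Suc)
          finally show ?thesis using xa by simp
        qed
        also have "\<dots> \<le> ((2 * (p+1) / alpha) * (k * t) powr (- 1 / th)) powr (1 / real (p+1))"
          using xb by (intro powr_mono2) auto
        also have "\<dots> = (2 * (p+1) / alpha) powr (1 / real (p+1)) * ((k * t) powr (- 1 / th)) powr (1 / real (p+1))"
          by (rule powr_mult)
        also have "((k * t) powr (- 1 / th)) powr (1 / real (p+1)) = (k * t) powr (- 1 / (real p - 1))"
        proof -
          have n1: "real p - 1 \<noteq> 0" "real p + 1 \<noteq> 0" using p by auto
          have th': "th = (real p - 1) / real (p+1)" unfolding th_def by simp
          have "- 1 / th * (1 / real (p+1)) = - 1 / (real p - 1)"
            unfolding th' by (rule aux_frac) (use n1 in auto)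
          then show ?thesis by (simp add: powr_powr)
        qed
        also have "(k * t) powr (- 1 / (real p - 1)) = k powr (- 1 / (real p - 1)) * t powr (- 1 / (real p - 1))"
          by (rule powr_mult)
        finally show ?thesis unfolding C_def by (simp add: mult_ac)
      qed
    qed
  qed
qed

theorem theorem1:
  fixes p :: nat and mu alpha x0 x1 :: real
  assumes "odd p" and "p \<ge> 3" and "mu \<ge> 0" and "alpha > 0"
  shows "\<exists>x. ivp_solution mu alpha p x0 x1 x \<and>
           (\<forall>y. ivp_solution mu alpha p x0 x1 y \<longrightarrow> (\<forall>t\<ge>0. y t = x t)) \<and>
           (mu > 0 \<longrightarrow> (\<exists>C>0. \<forall>t>0. \<bar>x t\<bar> \<le> C * t powr (- 1 / (real p - 1))))"
proof -
  obtain x where sx: "ivp_solution mu alpha p x0 x1 x"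
    using existence[OF assms(1) assms(3) assms(4)] by blast
  have u: "\<forall>y. ivp_solution mu alpha p x0 x1 y \<longrightarrow> (\<forall>t\<ge>0. y t = x t)"
    using uniqueness[OF assms(3) assms(4) sx] by blast
  have d: "mu > 0 \<longrightarrow> (\<exists>C>0. \<forall>t>0. \<bar>x t\<bar> \<le> C * t powr (- 1 / (real p - 1)))"
    using decay[OF assms(1) assms(2) _ assms(4) sx] by blast
  show ?thesis using sx u d by blast
qed

end
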